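(* Let $T>0$, $q>0$, $\eta>0$, $c>0$, $k\ge0$, and let $\lambda:[0,T]\to(0,\infty)$ be non-decreasing and continuously differentiable with $\lambda(0)=1$. There exists a constant $C>0$ depending only on $\lambda$, $c$, $q$ and $\eta$ such that, if $k>\max(4C^2,1)$, the equation $$\partial_t\Lambda(\tau;t)-2k\Lambda(\tau;t)+2\lambda(t-\tau)\Big(\Lambda(t;t)+\frac q2\Big)^2-4\Big(\Lambda(\tau;t)+\frac q2\lambda(t-\tau)\Big)\Big(\Lambda(t;t)+\frac q2\Big)+\frac\eta2\lambda(t-\tau)=0,\qquad \Lambda(\tau;T)=\frac c2\lambda(T-\tau),$$ for $0\le\tau\le t\le T$, admits a unique (continuous, real-valued) solution $\Lambda$ on $\{(\tau,t):0\le\tau\le t\le T\}$. *)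

theory Defs
  imports "HOL-Analysis.Analysis"
begin

definition triangle :: "real \<Rightarrow> (real \<times> real) set" where
  "triangle T = {(\<tau>, t). 0 \<le> \<tau> \<and> \<tau> \<le> t \<and> t \<le> T}"

definition is_solution ::
  "real \<Rightarrow> real \<Rightarrow> real \<Rightarrow> real \<Rightarrow> real \<Rightarrow> (real \<Rightarrow> real) \<Rightarrow> (real \<Rightarrow> real \<Rightarrow> real) \<Rightarrow> bool"
where
  "is_solution T k q \<eta> c lam Lam \<longleftrightarrow>
     continuous_on (triangle T) (\<lambda>(\<tau>, t). Lam \<tau> t) \<and>
     (\<forall>\<tau> t. (\<tau>, t) \<in> triangle T \<longrightarrow>
        (\<exists>D. ((\<lambda>s. Lam \<tau> s) has_real_derivative D) (at t within {\<tau>..T}) \<and>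
             D - 2 * k * Lam \<tau> t + 2 * lam (t - \<tau>) * (Lam t t + q / 2)^2
               - 4 * (Lam \<tau> t + q / 2 * lam (t - \<tau>)) * (Lam t t + q / 2)
               + \<eta> / 2 * lam (t - \<tau>) = 0)) \<and>
     (\<forall>\<tau>. 0 \<le> \<tau> \<and> \<tau> \<le> T \<longrightarrow> Lam \<tau> T = c / 2 * lam (T - \<tau>))"

end

theory Submission
  imports Defs
begin

lemma exp_diff_le:
  fixes x y :: real
  shows "\<bar>exp x - exp y\<bar> \<le> exp (max x y) * \<bar>x - y\<bar>"
proof -
  have key: "exp a - exp b \<le> exp a * (a - b)" if "b \<le> a" for a b :: real
  proof -
    have "1 - exp (b - a) \<le> a - b" using exp_ge_add_one_self[of "b - a"] by linarith
    hence "exp a * (1 - exp (b - a)) \<le> exp a * (a - b)" by (rule mult_left_mono) simp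
    moreover have "exp a * exp (b - a) = exp b" by (simp add: exp_add[symmetric])
    ultimately show ?thesis by (simp add: algebra_simps)
  qed
  show ?thesis
  proof (cases "y \<le> x")
    case True
    then show ?thesis using key[OF True] by (simp add: max_def)
  next
    case False
    then show ?thesis using key[of x y] by (simp add: max_def abs_minus_commute)
  qed
qed

lemma xexp_le:
  fixes x \<gamma> :: real
  assumes "x \<ge> 0" "\<gamma> > 0"
  shows "x * exp (- \<gamma> * x) \<le> (2 / \<gamma>) * exp (- (\<gamma> / 2) * x)"
proof -
  have "\<gamma> * x / 2 \<le> exp (\<gamma> * x / 2)"
    using exp_ge_add_one_self[of "\<gamma> * x / 2"] by linarith
  hence "x \<le> (2 / \<gamma>) * exp (\<gamma> * x / 2)" using assms by (simp add: field_simps)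
  hence "x * exp (- \<gamma> * x) \<le> (2 / \<gamma>) * exp (\<gamma> * x / 2) * exp (- \<gamma> * x)"
    by (intro mult_right_mono) auto
  also have "\<dots> = (2 / \<gamma>) * exp (- (\<gamma> / 2) * x)"
    by (simp add: mult.assoc exp_add[symmetric])
  finally show ?thesis .
qed

lemma exp_has_integral:
  fixes \<gamma> a b :: real
  assumes "\<gamma> > 0" "a \<le> b"
  shows "((\<lambda>s. exp (- \<gamma> * (s - a))) has_integral ((1 - exp (- \<gamma> * (b - a))) / \<gamma>)) {a..b}"
proof -
  have "((\<lambda>s. exp (- \<gamma> * (s - a))) has_integral
          ((- exp (- \<gamma> * (b - a)) / \<gamma>) - (- exp (- \<gamma> * (a - a)) / \<gamma>))) {a..b}"
    apply (rule fundamental_theorem_of_calculus[OF assms(2)])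
    unfolding has_real_derivative_iff_has_vector_derivative[symmetric]
    using assms(1)
    by (auto intro!: derivative_eq_intros simp: field_simps)
  then show ?thesis by (simp add: diff_divide_distrib)
qed

lemma exp_integrable:
  fixes \<gamma> a b :: real
  assumes "\<gamma> > 0" "a \<le> b"
  shows "(\<lambda>s. exp (- \<gamma> * (s - a))) integrable_on {a..b}"
  using exp_has_integral[OF assms] by blast

lemma exp_integral_le:
  fixes \<gamma> a b :: real
  assumes "\<gamma> > 0" "a \<le> b"
  shows "integral {a..b} (\<lambda>s. exp (- \<gamma> * (s - a))) \<le> 1 / \<gamma>"
  using integral_unique[OF exp_has_integral[OF assms]] assms
  by (simp add: divide_right_mono)

lemma integral_bound_exp:
  fixes f :: "real \<Rightarrow> real" and \<gamma> a b B :: real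
  assumes "\<gamma> > 0" "a \<le> b" "continuous_on {a..b} f" "B \<ge> 0"
    and "\<And>s. s \<in> {a..b} \<Longrightarrow> \<bar>f s\<bar> \<le> B * exp (- \<gamma> * (s - a))"
  shows "\<bar>integral {a..b} f\<bar> \<le> B / \<gamma>"
proof -
  have i1: "f integrable_on {a..b}" by (rule integrable_continuous_interval[OF assms(3)])
  have i2: "(\<lambda>s. B * exp (- \<gamma> * (s - a))) integrable_on {a..b}"
    using integrable_on_cmult_left[OF exp_integrable[OF assms(1,2)], of B] by simp
  have "\<bar>integral {a..b} f\<bar> \<le> integral {a..b} (\<lambda>s. B * exp (- \<gamma> * (s - a)))"
    using integral_norm_bound_integral[OF i1 i2] assms(5) by simp
  also have "\<dots> = B * integral {a..b} (\<lambda>s. exp (- \<gamma> * (s - a)))"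
    using integral_mult[OF exp_integrable[OF assms(1,2)], of B] by simp
  also have "\<dots> \<le> B * (1 / \<gamma>)"
    by (intro mult_left_mono exp_integral_le assms) 
  finally show ?thesis by simp
qed

lemma cont_lip:
  fixes f :: "real \<times> real \<Rightarrow> real"
  assumes c: "\<And>t. t \<in> Y \<Longrightarrow> continuous_on X (\<lambda>x. f (x, t))"
    and l: "\<And>x t t'. x \<in> X \<Longrightarrow> t \<in> Y \<Longrightarrow> t' \<in> Y \<Longrightarrow> \<bar>f (x, t) - f (x, t')\<bar> \<le> B * \<bar>t - t'\<bar>"
    and B: "B \<ge> 0"
  shows "continuous_on (X \<times> Y) f"
  unfolding continuous_on_iff
proof (intro ballI allI impI)
  fix p e assume p: "p \<in> X \<times> Y" and e: "(0::real) < e"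
  obtain x0 t0 where p0: "p = (x0, t0)" "x0 \<in> X" "t0 \<in> Y" using p by auto
  from c[OF p0(3)] p0(2) e obtain d1 where d1: "d1 > 0"
    "\<forall>x'\<in>X. dist x' x0 < d1 \<longrightarrow> dist (f (x', t0)) (f (x0, t0)) < e / 2"
    unfolding continuous_on_iff by (meson half_gt_zero)
  define d where "d = min d1 (e / (2 * (B + 1)))"
  have d: "d > 0" using d1 e B by (simp add: d_def)
  show "\<exists>d>0. \<forall>x'\<in>X \<times> Y. dist x' p < d \<longrightarrow> dist (f x') (f p) < e"
  proof (intro exI[of _ d] conjI d ballI impI)
    fix q assume q: "q \<in> X \<times> Y" "dist q p < d"
    obtain x t where q0: "q = (x, t)" "x \<in> X" "t \<in> Y" using q by auto
    have dx: "dist x x0 < d1" using dist_fst_le[of q p] q(2) p0 q0 d_def by auto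
    have dt: "\<bar>t - t0\<bar> < e / (2 * (B + 1))"
      using dist_snd_le[of q p] q(2) p0 q0 d_def by (auto simp: dist_real_def)
    have "\<bar>f (x, t) - f (x, t0)\<bar> \<le> B * \<bar>t - t0\<bar>" by (rule l) (use q0 p0 in auto)
    also have "\<dots> \<le> (B + 1) * \<bar>t - t0\<bar>" by (simp add: mult_right_mono)
    also have "\<dots> \<le> (B + 1) * (e / (2 * (B + 1)))" using dt B
      by (intro mult_left_mono) auto
    also have "\<dots> = e / 2" using B by (simp add: field_simps)
    finally have 1: "\<bar>f (x, t) - f (x, t0)\<bar> \<le> e / 2" .
    have 2: "\<bar>f (x, t0) - f (x0, t0)\<bar> < e / 2" using d1(2) q0 dx by (auto simp: dist_real_def)
    show "dist (f q) (f p) < e" using 1 2 q0 p0 by (simp add: dist_real_def) (smt (verit))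
  qed
qed

lemma cont_lip2:
  fixes f :: "real \<Rightarrow> real \<Rightarrow> real"
  assumes c: "\<And>t. t \<in> Y \<Longrightarrow> continuous_on X (\<lambda>x. f x t)"
    and l: "\<And>x t t'. x \<in> X \<Longrightarrow> t \<in> Y \<Longrightarrow> t' \<in> Y \<Longrightarrow> \<bar>f x t - f x t'\<bar> \<le> B * \<bar>t - t'\<bar>"
    and B: "B \<ge> 0"
  shows "continuous_on (X \<times> Y) (\<lambda>(x, t). f x t)"
  using cont_lip[of Y X "\<lambda>(x, t). f x t" B] assms by simp

lemma cont_param_integral:
  fixes P :: "real \<Rightarrow> real \<Rightarrow> real" and T :: real
  assumes c: "continuous_on ({0..T} \<times> {0..T}) (\<lambda>(x, s). P x s)"
  shows "continuous_on ({0..T} \<times> {0..T}) (\<lambda>(x, t). integral {t..T} (P x))"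
proof -
  have "compact ((\<lambda>(x, s). P x s) ` ({0..T} \<times> {0..T}))"
    by (intro compact_continuous_image c compact_Times compact_Icc)
  then have "bounded ((\<lambda>(x, s). P x s) ` ({0..T} \<times> {0..T}))" by (rule compact_imp_bounded)
  then obtain B0 where B0: "\<forall>y\<in>(\<lambda>(x, s). P x s) ` ({0..T} \<times> {0..T}). norm y \<le> B0"
    unfolding bounded_iff by blast
  have B: "\<And>y. y \<in> (\<lambda>(x, s). P x s) ` ({0..T} \<times> {0..T}) \<Longrightarrow> norm y \<le> B0" using B0 by blast
  define B where "B = max B0 0"
  have B0: "B \<ge> 0" by (simp add: B_def)
  have Bx: "\<bar>P x s\<bar> \<le> B" if "x \<in> {0..T}" "s \<in> {0..T}" for x s
    using B[of "P x s"] that unfolding B_def real_norm_def by force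
  show ?thesis
  proof (rule cont_lip2[where B=B])
    fix t assume t: "t \<in> {0..T}"
    have "continuous_on ({0..T} \<times> cbox t T) (\<lambda>(x, s). P x s)"
      by (rule continuous_on_subset[OF c]) (use t in auto)
    from integral_continuous_on_param[OF this]
    show "continuous_on {0..T} (\<lambda>x. integral {t..T} (P x))" by simp
  next
    fix x t t' assume xt: "x \<in> {0..T}" "t \<in> {0..T}" "t' \<in> {0..T}"
    have cx: "continuous_on {0..T} (P x)"
      by (rule continuous_on_compose2[OF c, where f="\<lambda>s. (x, s)", simplified])
         (use xt in \<open>auto intro!: continuous_intros\<close>)
    have key: "\<bar>integral {a..T} (P x) - integral {b..T} (P x)\<bar> \<le> B * \<bar>a - b\<bar>"
      if "a \<in> {0..T}" "b \<in> {0..T}" "a \<le> b" for a b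
    proof -
      have int: "P x integrable_on {a..T}"
        by (rule integrable_continuous_interval, rule continuous_on_subset[OF cx]) (use that in auto)
      have "integral {a..b} (P x) + integral {b..T} (P x) = integral {a..T} (P x)"
        using Henstock_Kurzweil_Integration.integral_combine[where f="P x" and a=a and c=b and b=T] that int by auto
      moreover have "\<bar>integral {a..b} (P x)\<bar> \<le> B * (b - a)"
        using integral_bound[of a b "P x" B] that Bx[OF xt(1)] continuous_on_subset[OF cx, of "{a..b}"]
        by auto
      ultimately show ?thesis using that by auto
    qed
    show "\<bar>integral {t..T} (P x) - integral {t'..T} (P x)\<bar> \<le> B * \<bar>t - t'\<bar>"
    proof (cases "t \<le> t'")
      case True then show ?thesis using key[of t t'] xt by auto
    next
      case False then show ?thesis using key[of t' t] xt by (auto simp: abs_minus_commute)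
    qed
  qed (rule B0)
qed


locale setting =
  fixes T q eta c :: real and lam :: "real \<Rightarrow> real"
  assumes T: "T > 0" and q: "q > 0" and eta: "eta > 0" and c: "c > 0"
    and lpos: "\<forall>x\<in>{0..T}. lam x > 0"
    and lmono: "mono_on {0..T} lam"
    and lcont: "continuous_on {0..T} lam"
    and l0: "lam 0 = 1"
begin

definition clamp :: "real \<Rightarrow> real" where "clamp x = max 0 (min T x)"
definition lamE :: "real \<Rightarrow> real" where "lamE x = lam (clamp x)"
definition L :: real where "L = lam T"
definition R :: real where "R = c / 2 * L + 1"
definition clip :: "real \<Rightarrow> real" where "clip x = max (- R) (min R x)"
definition hh :: "real \<Rightarrow> real" where "hh x = - 2 * (x + q / 2)^2 + 2 * q * (x + q / 2) - eta / 2"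
definition H :: real where "H = 2 * (R + q / 2)^2 + 2 * q * (R + q / 2) + eta / 2"
definition Lh :: real where "Lh = 4 * R + 4 * q"
definition M :: real where "M = 4 * R + 2 * q"
definition beta :: "real \<Rightarrow> real" where "beta k = 2 * k - M"
definition ff :: "(real \<Rightarrow> real) \<Rightarrow> real \<Rightarrow> real" where "ff g s = 4 * clip (g s) + 2 * q"
definition Psi :: "real \<Rightarrow> (real \<Rightarrow> real) \<Rightarrow> real \<Rightarrow> real" where
  "Psi k g t = 2 * k * t + integral {0..t} (ff g)"
definition Pint :: "real \<Rightarrow> (real \<Rightarrow> real) \<Rightarrow> real \<Rightarrow> real \<Rightarrow> real" where
  "Pint k g \<tau> s = exp (- Psi k g s) * lamE (s - \<tau>) * hh (clip (g s))"
definition Lm :: "real \<Rightarrow> (real \<Rightarrow> real) \<Rightarrow> real \<Rightarrow> real \<Rightarrow> real" where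
  "Lm k g \<tau> t = exp (Psi k g t) * (exp (- Psi k g T) * (c / 2 * lamE (T - \<tau>)) - integral {t..T} (Pint k g \<tau>))"

lemma clamp_in: "clamp x \<in> {0..T}" using T by (auto simp: clamp_def)
lemma clamp_id: "x \<in> {0..T} \<Longrightarrow> clamp x = x" by (auto simp: clamp_def)
lemma clamp_cont: "continuous_on S clamp" unfolding clamp_def by (intro continuous_intros)

lemma lamE_cont: "continuous_on S lamE"
proof -
  have "continuous_on UNIV lamE"
    unfolding lamE_def
    by (rule continuous_on_compose2[OF lcont clamp_cont]) (use clamp_in in auto)
  then show ?thesis using continuous_on_subset by blast
qed

lemma lamE_id: "x \<in> {0..T} \<Longrightarrow> lamE x = lam x" by (simp add: lamE_def clamp_id)

lemma L_pos: "L \<ge> 1"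
  using mono_onD[OF lmono, of 0 T] T l0 unfolding L_def by auto

lemma lamE_bound: "0 < lamE x \<and> lamE x \<le> L"
  using lpos clamp_in[of x] lmono T unfolding lamE_def L_def mono_on_def by auto

lemma R_pos: "R \<ge> 1" using c L_pos by (simp add: R_def)

lemma clip_bound: "\<bar>clip x\<bar> \<le> R" using R_pos by (auto simp: clip_def)
lemma clip_lip: "\<bar>clip x - clip y\<bar> \<le> \<bar>x - y\<bar>" by (auto simp: clip_def)
lemma clip_id: "\<bar>x\<bar> \<le> R \<Longrightarrow> clip x = x" by (auto simp: clip_def)
lemma clip_cont: "continuous_on S clip" unfolding clip_def by (intro continuous_intros)

lemma hh_bound: assumes "\<bar>x\<bar> \<le> R" shows "\<bar>hh x\<bar> \<le> H"
proof -
  have a: "\<bar>x + q / 2\<bar> \<le> R + q / 2" using assms q by auto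
  have "(x + q / 2)^2 \<le> (R + q / 2)^2"
    using a by (metis abs_le_square_iff abs_of_nonneg add_nonneg_nonneg le_less order_trans abs_ge_zero q R_pos half_gt_zero)
  moreover have "\<bar>2 * q * (x + q / 2)\<bar> \<le> 2 * q * (R + q / 2)"
    using a q by (simp add: abs_mult)
  moreover have "0 \<le> (x + q / 2)^2" by simp
  ultimately show ?thesis unfolding hh_def H_def abs_le_iff using eta
    by linarith
qed

lemma hh_lip: assumes "\<bar>x\<bar> \<le> R" "\<bar>y\<bar> \<le> R" shows "\<bar>hh x - hh y\<bar> \<le> Lh * \<bar>x - y\<bar>"
proof -
  have e: "hh x - hh y = (x - y) * (2 * q - 2 * (x + y + q))"
    unfolding hh_def by (simp add: power2_eq_square algebra_simps)
  have "\<bar>2 * q - 2 * (x + y + q)\<bar> \<le> Lh" using assms q unfolding Lh_def by auto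
  then have "\<bar>x - y\<bar> * \<bar>2 * q - 2 * (x + y + q)\<bar> \<le> \<bar>x - y\<bar> * Lh"
    by (rule mult_left_mono) simp
  then show ?thesis unfolding e by (simp add: abs_mult mult.commute)
qed

lemma H_pos: "H \<ge> 0" unfolding H_def using q eta R_pos by (simp add: add_nonneg_nonneg)
lemma Lh_pos: "Lh \<ge> 0" unfolding Lh_def using q R_pos by simp
lemma M_pos: "M > 0" unfolding M_def using q R_pos by simp

context
  fixes k :: real and g :: "real \<Rightarrow> real"
  assumes gc: "continuous_on UNIV g"
begin

lemma ff_cont: "continuous_on S (ff g)"
  unfolding ff_def
  by (intro continuous_intros continuous_on_compose2[OF clip_cont, of _ g] continuous_on_subset[OF gc]) auto

lemma ff_bound: "\<bar>ff g s\<bar> \<le> M"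
  using clip_bound[of "g s"] q unfolding ff_def M_def by auto

lemma Psi_deriv:
  assumes "t \<in> {0..T}"
  shows "(Psi k g has_real_derivative (2 * k + ff g t)) (at t within {0..T})"
proof -
  have "((\<lambda>u. integral {0..u} (ff g)) has_real_derivative ff g t) (at t within {0..T})"
    using integral_has_vector_derivative[OF ff_cont assms]
    by (simp add: has_real_derivative_iff_has_vector_derivative)
  then show ?thesis unfolding Psi_def[abs_def]
    by (auto intro!: derivative_eq_intros)
qed

lemma Psi_cont: "continuous_on {0..T} (Psi k g)"
  unfolding Psi_def
  by (intro continuous_intros indefinite_integral_continuous_1 integrable_continuous_interval ff_cont)

lemma Psi_diff:
  assumes "0 \<le> t" "t \<le> s" "s \<le> T"
  shows "Psi k g s - Psi k g t = 2 * k * (s - t) + integral {t..s} (ff g)"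
proof -
  have "integral {0..t} (ff g) + integral {t..s} (ff g) = integral {0..s} (ff g)"
    by (rule Henstock_Kurzweil_Integration.integral_combine)
       (use assms in \<open>auto intro!: integrable_continuous_interval ff_cont\<close>)
  then show ?thesis unfolding Psi_def by (simp add: algebra_simps)
qed

lemma Psi_lower:
  assumes "0 \<le> t" "t \<le> s" "s \<le> T"
  shows "Psi k g t - Psi k g s \<le> - beta k * (s - t)"
proof -
  have "\<bar>integral {t..s} (ff g)\<bar> \<le> M * (s - t)"
    using integral_bound[of t s "ff g" M] assms ff_cont ff_bound by auto
  then show ?thesis using Psi_diff[OF assms] unfolding beta_def by (auto simp: algebra_simps)
qed

end

lemma Psi_lip:
  assumes g1: "continuous_on UNIV g1" and g2: "continuous_on UNIV g2"
    and d: "\<And>x. \<bar>g1 x - g2 x\<bar> \<le> d"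
    and "0 \<le> t" "t \<le> s" "s \<le> T"
  shows "\<bar>(Psi k g1 t - Psi k g1 s) - (Psi k g2 t - Psi k g2 s)\<bar> \<le> 4 * d * (s - t)"
proof -
  have "integral {t..s} (ff g1) - integral {t..s} (ff g2) = integral {t..s} (\<lambda>x. ff g1 x - ff g2 x)"
    by (rule integral_diff[symmetric]) (auto intro!: integrable_continuous_interval ff_cont g1 g2)
  moreover have "\<bar>integral {t..s} (\<lambda>x. ff g1 x - ff g2 x)\<bar> \<le> (4 * d) * (s - t)"
  proof -
    have "norm (integral {t..s} (\<lambda>x. ff g1 x - ff g2 x)) \<le> (4 * d) * (s - t)"
    proof (rule integral_bound)
      show "t \<le> s" by fact
      show "continuous_on {t..s} (\<lambda>x. ff g1 x - ff g2 x)"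
        by (intro continuous_intros ff_cont g1 g2)
      fix x show "norm (ff g1 x - ff g2 x) \<le> 4 * d"
        using clip_lip[of "g1 x" "g2 x"] d[of x] unfolding ff_def by auto
    qed
    then show ?thesis by simp
  qed
  ultimately show ?thesis using Psi_diff[OF g1, of t s k] Psi_diff[OF g2, of t s k] assms
    by (simp add: algebra_simps)
qed

end


context setting
begin

context
  fixes k :: real and g :: "real \<Rightarrow> real"
  assumes gc: "continuous_on UNIV g"
begin

lemma hh_cont: "continuous_on S hh" unfolding hh_def by (intro continuous_intros)

lemma hcg_cont: "continuous_on S (\<lambda>s. hh (clip (g s)))"
proof -
  have "continuous_on S g" using continuous_on_subset[OF gc] by blast
  then have "continuous_on S (\<lambda>s. clip (g s))"
    by (rule continuous_on_compose2[OF clip_cont[of UNIV]]) auto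
  then show ?thesis
    by (rule continuous_on_compose2[OF hh_cont[of UNIV]]) auto
qed

lemma Pint_cont2: "continuous_on ({0..T} \<times> {0..T}) (\<lambda>(\<tau>, s). Pint k g \<tau> s)"
proof -
  have p: "continuous_on ({0..T} \<times> {0..T}) (\<lambda>p. Psi k g (snd p))"
    by (rule continuous_on_compose2[OF Psi_cont[OF gc] continuous_on_snd]) auto
  have l: "continuous_on ({0..T} \<times> {0..T}) (\<lambda>p. lamE (snd p - fst p))"
    by (rule continuous_on_compose2[OF lamE_cont[of UNIV]]) (auto intro!: continuous_intros)
  have h: "continuous_on ({0..T} \<times> {0..T}) (\<lambda>p. hh (clip (g (snd p))))"
    by (rule continuous_on_compose2[OF hcg_cont[of UNIV]]) (auto intro!: continuous_intros)
  have "continuous_on ({0..T} \<times> {0..T}) (\<lambda>p. exp (- Psi k g (snd p)) * lamE (snd p - fst p) * hh (clip (g (snd p))))"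
    by (intro continuous_intros p l h)
  then show ?thesis unfolding Pint_def by (simp add: split_beta)
qed

lemma Pint_cont1: "continuous_on {0..T} (Pint k g \<tau>)"
  unfolding Pint_def
  by (intro continuous_intros Psi_cont[OF gc] hcg_cont continuous_on_compose2[OF lamE_cont[of UNIV]]) auto

lemma Lm_cont: "continuous_on ({0..T} \<times> {0..T}) (\<lambda>(\<tau>, t). Lm k g \<tau> t)"
proof -
  have J: "continuous_on ({0..T} \<times> {0..T}) (\<lambda>p. integral {snd p..T} (Pint k g (fst p)))"
    using cont_param_integral[OF Pint_cont2] by (simp add: split_beta)
  have p: "continuous_on ({0..T} \<times> {0..T}) (\<lambda>p. Psi k g (snd p))"
    by (rule continuous_on_compose2[OF Psi_cont[OF gc] continuous_on_snd]) auto
  have l: "continuous_on ({0..T} \<times> {0..T}) (\<lambda>p. lamE (T - fst p))"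
    by (rule continuous_on_compose2[OF lamE_cont[of UNIV]]) (auto intro!: continuous_intros)
  have "continuous_on ({0..T} \<times> {0..T}) (\<lambda>p. exp (Psi k g (snd p)) * (exp (- Psi k g T) * (c / 2 * lamE (T - fst p)) - integral {snd p..T} (Pint k g (fst p))))"
    by (intro continuous_intros p l J)
  then show ?thesis unfolding Lm_def by (simp add: split_beta)
qed

lemma Lm_alt:
  assumes t: "t \<in> {0..T}"
  shows "Lm k g \<tau> t = exp (Psi k g t - Psi k g T) * (c / 2 * lamE (T - \<tau>))
     - integral {t..T} (\<lambda>s. exp (Psi k g t - Psi k g s) * lamE (s - \<tau>) * hh (clip (g s)))"
proof -
  have int: "Pint k g \<tau> integrable_on {t..T}"
    by (rule integrable_continuous_interval, rule continuous_on_subset[OF Pint_cont1]) (use t in auto)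
  have "exp (Psi k g t) * integral {t..T} (Pint k g \<tau>) = integral {t..T} (\<lambda>s. exp (Psi k g t) * Pint k g \<tau> s)"
    by (rule integral_mult[OF int])
  also have "\<dots> = integral {t..T} (\<lambda>s. exp (Psi k g t - Psi k g s) * lamE (s - \<tau>) * hh (clip (g s)))"
    by (rule integral_cong) (simp add: Pint_def exp_diff exp_minus field_simps)
  finally have e: "exp (Psi k g t) * integral {t..T} (Pint k g \<tau>) = integral {t..T} (\<lambda>s. exp (Psi k g t - Psi k g s) * lamE (s - \<tau>) * hh (clip (g s)))" .
  show ?thesis unfolding Lm_def right_diff_distrib e[symmetric]
    by (simp add: exp_diff exp_minus field_simps)
qed

lemma kern_cont:
  assumes t: "t \<in> {0..T}"
  shows "continuous_on {t..T} (\<lambda>s. exp (Psi k g t - Psi k g s) * lamE (s - \<tau>) * hh (clip (g s)))"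
  by (intro continuous_intros continuous_on_subset[OF Psi_cont[OF gc]] hcg_cont
      continuous_on_compose2[OF lamE_cont[of UNIV]]) (use t in auto)

lemma Lm_bound:
  assumes t: "t \<in> {0..T}" and b: "beta k > 0"
  shows "\<bar>Lm k g \<tau> t\<bar> \<le> c / 2 * L + 2 * L * H / beta k"
proof -
  have e1: "exp (Psi k g t - Psi k g T) \<le> 1"
  proof -
    have "0 \<le> beta k * (T - t)" using t b by simp
    then show ?thesis using Psi_lower[OF gc, of t T k] t by simp
  qed
  have t1: "\<bar>exp (Psi k g t - Psi k g T) * (c / 2 * lamE (T - \<tau>))\<bar> \<le> c / 2 * L"
  proof -
    have "\<bar>exp (Psi k g t - Psi k g T) * (c / 2 * lamE (T - \<tau>))\<bar> = exp (Psi k g t - Psi k g T) * (c / 2 * lamE (T - \<tau>))"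
      using lamE_bound[of "T - \<tau>"] c by simp
    also have "\<dots> \<le> 1 * (c / 2 * L)"
      using e1 lamE_bound[of "T - \<tau>"] c by (intro mult_mono) auto
    finally show ?thesis by simp
  qed
  have t2: "\<bar>integral {t..T} (\<lambda>s. exp (Psi k g t - Psi k g s) * lamE (s - \<tau>) * hh (clip (g s)))\<bar> \<le> (L * H) / (beta k / 2)"
  proof (rule integral_bound_exp)
    show "beta k / 2 > 0" using b by simp
    show "t \<le> T" using t by simp
    show "continuous_on {t..T} (\<lambda>s. exp (Psi k g t - Psi k g s) * lamE (s - \<tau>) * hh (clip (g s)))"
      by (rule kern_cont[OF t])
    show "0 \<le> L * H" using L_pos H_pos by simp
    fix s assume s: "s \<in> {t..T}"
    have "exp (Psi k g t - Psi k g s) \<le> exp (- (beta k / 2) * (s - t))"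
    proof -
      have "0 \<le> beta k * (s - t)" using s b by simp
      moreover have "Psi k g t - Psi k g s \<le> - beta k * (s - t)"
        using Psi_lower[OF gc, of t s k] s t by auto
      moreover have "- (beta k / 2) * (s - t) = - (beta k * (s - t)) / 2" by simp
      ultimately have "Psi k g t - Psi k g s \<le> - (beta k / 2) * (s - t)"
        by linarith
      then show ?thesis by simp
    qed
    moreover have "\<bar>lamE (s - \<tau>) * hh (clip (g s))\<bar> \<le> L * H"
      using lamE_bound[of "s - \<tau>"] hh_bound[OF clip_bound] H_pos by (auto simp: abs_mult intro!: mult_mono)
    ultimately have "exp (Psi k g t - Psi k g s) * \<bar>lamE (s - \<tau>) * hh (clip (g s))\<bar> \<le> exp (- (beta k / 2) * (s - t)) * (L * H)"
      by (intro mult_mono) auto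
    then show "\<bar>exp (Psi k g t - Psi k g s) * lamE (s - \<tau>) * hh (clip (g s))\<bar> \<le> L * H * exp (- (beta k / 2) * (s - t))"
      by (simp add: abs_mult mult.commute mult.left_commute)
  qed
  have e: "(L * H) / (beta k / 2) = 2 * L * H / beta k" by simp
  show ?thesis unfolding Lm_alt[OF t] using t1 t2 e abs_triangle_ineq4 by (smt (verit))
qed

lemma Lm_T: "Lm k g \<tau> T = c / 2 * lamE (T - \<tau>)"
proof -
  have "exp (Psi k g T) * exp (- Psi k g T) = 1" by (simp add: exp_minus_inverse)
  then show ?thesis unfolding Lm_def by (simp add: mult.assoc[symmetric])
qed

end

end


context setting
begin

context
  fixes k :: real and g :: "real \<Rightarrow> real"
  assumes gc: "continuous_on UNIV g"
begin

lemma E_le: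
  assumes "0 \<le> t" "t \<le> s" "s \<le> T" "beta k > 0"
  shows "exp (Psi k g t - Psi k g s) \<le> exp (- (beta k / 2) * (s - t))"
proof -
  have "0 \<le> beta k * (s - t)" using assms by simp
  moreover have "Psi k g t - Psi k g s \<le> - beta k * (s - t)"
    using Psi_lower[OF gc, of t s k] assms by auto
  moreover have "- (beta k / 2) * (s - t) = - (beta k * (s - t)) / 2" by simp
  ultimately have "Psi k g t - Psi k g s \<le> - (beta k / 2) * (s - t)"
    by linarith
  then show ?thesis by simp
qed

lemma Lm_deriv:
  assumes \<tau>: "0 \<le> \<tau>" and t: "\<tau> \<le> t" "t \<le> T"
  shows "((\<lambda>s. Lm k g \<tau> s) has_real_derivative
           ((2 * k + ff g t) * Lm k g \<tau> t + lamE (t - \<tau>) * hh (clip (g t)))) (at t within {\<tau>..T})"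
proof -
  have sub: "{\<tau>..T} \<subseteq> {0..T}" using \<tau> by auto
  have tin: "t \<in> {\<tau>..T}" using t by auto
  have P: "(Psi k g has_real_derivative (2 * k + ff g t)) (at t within {\<tau>..T})"
    by (rule DERIV_subset[OF Psi_deriv[OF gc] sub]) (use \<tau> t in auto)
  have Pc: "continuous_on {\<tau>..T} (Pint k g \<tau>)" by (rule continuous_on_subset[OF Pint_cont1[OF gc] sub])
  have I: "((\<lambda>u. integral {\<tau>..u} (Pint k g \<tau>)) has_real_derivative Pint k g \<tau> t) (at t within {\<tau>..T})"
    using integral_has_vector_derivative[OF Pc tin]
    by (simp add: has_real_derivative_iff_has_vector_derivative)
  have eq: "integral {\<tau>..T} (Pint k g \<tau>) - integral {\<tau>..u} (Pint k g \<tau>) = integral {u..T} (Pint k g \<tau>)"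
    if "u \<in> {\<tau>..T}" for u
  proof -
    have "integral {\<tau>..u} (Pint k g \<tau>) + integral {u..T} (Pint k g \<tau>) = integral {\<tau>..T} (Pint k g \<tau>)"
      using Henstock_Kurzweil_Integration.integral_combine[where f="Pint k g \<tau>" and a=\<tau> and c=u and b=T]
        that integrable_continuous_interval[OF Pc] by auto
    then show ?thesis by simp
  qed
  have Q0: "((\<lambda>u. integral {\<tau>..T} (Pint k g \<tau>) - integral {\<tau>..u} (Pint k g \<tau>)) has_real_derivative (0 - Pint k g \<tau> t)) (at t within {\<tau>..T})"
    by (rule DERIV_diff[OF DERIV_const I])
  have Q: "((\<lambda>u. integral {u..T} (Pint k g \<tau>)) has_real_derivative (0 - Pint k g \<tau> t)) (at t within {\<tau>..T})"
    by (rule has_field_derivative_transform_within[OF Q0 zero_less_one tin]) (use eq in auto)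
  define K where "K = exp (- Psi k g T) * (c / 2 * lamE (T - \<tau>))"
  have E: "((\<lambda>u. exp (Psi k g u)) has_real_derivative exp (Psi k g t) * (2 * k + ff g t)) (at t within {\<tau>..T})"
    by (rule DERIV_chain2[OF DERIV_exp P])
  have KQ: "((\<lambda>u. K - integral {u..T} (Pint k g \<tau>)) has_real_derivative (0 - (0 - Pint k g \<tau> t))) (at t within {\<tau>..T})"
    by (rule DERIV_diff[OF DERIV_const Q])
  have D: "((\<lambda>u. exp (Psi k g u) * (K - integral {u..T} (Pint k g \<tau>))) has_real_derivative
      (exp (Psi k g t) * (2 * k + ff g t)) * (K - integral {t..T} (Pint k g \<tau>)) + (0 - (0 - Pint k g \<tau> t)) * exp (Psi k g t))
      (at t within {\<tau>..T})"
    by (rule DERIV_mult[OF E KQ])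
  have fe: "(\<lambda>s. Lm k g \<tau> s) = (\<lambda>u. exp (Psi k g u) * (K - integral {u..T} (Pint k g \<tau>)))"
    unfolding Lm_def K_def by simp
  have ve: "(exp (Psi k g t) * (2 * k + ff g t)) * (K - integral {t..T} (Pint k g \<tau>)) + (0 - (0 - Pint k g \<tau> t)) * exp (Psi k g t)
     = (2 * k + ff g t) * Lm k g \<tau> t + lamE (t - \<tau>) * hh (clip (g t))"
  proof -
    have "Pint k g \<tau> t * exp (Psi k g t) = lamE (t - \<tau>) * hh (clip (g t))"
      unfolding Pint_def using exp_minus_inverse[of "Psi k g t"] by (simp add: algebra_simps)
    then show ?thesis unfolding Lm_def K_def by (simp add: algebra_simps)
  qed
  show ?thesis using D unfolding fe ve .
qed

end

lemma E_diff:
  assumes g1: "continuous_on UNIV g1" and g2: "continuous_on UNIV g2"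
    and d: "\<And>x. \<bar>g1 x - g2 x\<bar> \<le> d"
    and st: "0 \<le> t" "t \<le> s" "s \<le> T" and b: "beta k > 0"
  shows "\<bar>exp (Psi k g1 t - Psi k g1 s) - exp (Psi k g2 t - Psi k g2 s)\<bar>
           \<le> (8 * d / beta k) * exp (- (beta k / 2) * (s - t))"
proof -
  have d0: "d \<ge> 0" using d[of 0] by linarith
  have m: "max (Psi k g1 t - Psi k g1 s) (Psi k g2 t - Psi k g2 s) \<le> - beta k * (s - t)"
    using Psi_lower[OF g1, of t s k] Psi_lower[OF g2, of t s k] st by auto
  have "\<bar>exp (Psi k g1 t - Psi k g1 s) - exp (Psi k g2 t - Psi k g2 s)\<bar>
     \<le> exp (max (Psi k g1 t - Psi k g1 s) (Psi k g2 t - Psi k g2 s)) * \<bar>(Psi k g1 t - Psi k g1 s) - (Psi k g2 t - Psi k g2 s)\<bar>"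
    by (rule exp_diff_le)
  also have "\<dots> \<le> exp (- beta k * (s - t)) * (4 * d * (s - t))"
    using m Psi_lip[OF g1 g2 d st, of k] by (intro mult_mono) auto
  also have "\<dots> = 4 * d * ((s - t) * exp (- beta k * (s - t)))" by simp
  also have "\<dots> \<le> 4 * d * ((2 / beta k) * exp (- (beta k / 2) * (s - t)))"
    using xexp_le[of "s - t" "beta k"] st b d0 by (intro mult_left_mono) auto
  also have "\<dots> = (8 * d / beta k) * exp (- (beta k / 2) * (s - t))" by simp
  finally show ?thesis .
qed

lemma Lm_contr:
  assumes g1: "continuous_on UNIV g1" and g2: "continuous_on UNIV g2"
    and d: "\<And>x. \<bar>g1 x - g2 x\<bar> \<le> d"
    and t: "t \<in> {0..T}" and b: "beta k \<ge> 1"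
  shows "\<bar>Lm k g1 \<tau> t - Lm k g2 \<tau> t\<bar> \<le> (4 * c * L + 16 * L * H + 2 * L * Lh) / beta k * d"
proof -
  have d0: "d \<ge> 0" using d[of 0] by linarith
  have b0: "beta k > 0" using b by simp
  define F1 where "F1 = (\<lambda>s. exp (Psi k g1 t - Psi k g1 s) * lamE (s - \<tau>) * hh (clip (g1 s)))"
  define F2 where "F2 = (\<lambda>s. exp (Psi k g2 t - Psi k g2 s) * lamE (s - \<tau>) * hh (clip (g2 s)))"
  have c1: "continuous_on {t..T} F1" unfolding F1_def by (rule kern_cont[OF g1 t])
  have c2: "continuous_on {t..T} F2" unfolding F2_def by (rule kern_cont[OF g2 t])
  have idiff: "integral {t..T} F1 - integral {t..T} F2 = integral {t..T} (\<lambda>s. F1 s - F2 s)"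
    by (rule integral_diff[symmetric]) (auto intro!: integrable_continuous_interval c1 c2)
  have t1: "\<bar>(exp (Psi k g1 t - Psi k g1 T) - exp (Psi k g2 t - Psi k g2 T)) * (c / 2 * lamE (T - \<tau>))\<bar>
      \<le> (8 * d / beta k) * (c / 2 * L)"
  proof -
    have "\<bar>exp (Psi k g1 t - Psi k g1 T) - exp (Psi k g2 t - Psi k g2 T)\<bar> \<le> (8 * d / beta k) * exp (- (beta k / 2) * (T - t))"
      by (rule E_diff[OF g1 g2 d]) (use t b0 in auto)
    also have "\<dots> \<le> (8 * d / beta k) * 1"
      using t b0 d0 by (intro mult_left_mono) auto
    finally have a: "\<bar>exp (Psi k g1 t - Psi k g1 T) - exp (Psi k g2 t - Psi k g2 T)\<bar> \<le> 8 * d / beta k" by simp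
    have "\<bar>c / 2 * lamE (T - \<tau>)\<bar> \<le> c / 2 * L" using c lamE_bound[of "T - \<tau>"] by simp
    then have "\<bar>exp (Psi k g1 t - Psi k g1 T) - exp (Psi k g2 t - Psi k g2 T)\<bar> * \<bar>c / 2 * lamE (T - \<tau>)\<bar> \<le> (8 * d / beta k) * (c / 2 * L)"
      using a d0 b0 by (intro mult_mono) auto
    then show ?thesis by (simp only: abs_mult)
  qed
  have t2: "\<bar>integral {t..T} (\<lambda>s. F1 s - F2 s)\<bar> \<le> (L * d * (8 * H / beta k + Lh)) / (beta k / 2)"
  proof (rule integral_bound_exp)
    show "beta k / 2 > 0" using b0 by simp
    show "t \<le> T" using t by simp
    show "continuous_on {t..T} (\<lambda>s. F1 s - F2 s)" by (intro continuous_intros c1 c2)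
    show "0 \<le> L * d * (8 * H / beta k + Lh)" using L_pos d0 H_pos Lh_pos b0 by simp
    fix s assume s: "s \<in> {t..T}"
    define E1 where "E1 = exp (Psi k g1 t - Psi k g1 s)"
    define E2 where "E2 = exp (Psi k g2 t - Psi k g2 s)"
    define h1 where "h1 = hh (clip (g1 s))"
    define h2 where "h2 = hh (clip (g2 s))"
    define l where "l = lamE (s - \<tau>)"
    define X where "X = exp (- (beta k / 2) * (s - t))"
    have eE: "\<bar>E1 - E2\<bar> \<le> (8 * d / beta k) * X"
      unfolding E1_def E2_def X_def by (rule E_diff[OF g1 g2 d]) (use t s b0 in auto)
    have E2b: "E2 \<le> X" unfolding E2_def X_def by (rule E_le[OF g2]) (use t s b0 in auto)
    have E2p: "E2 \<ge> 0" unfolding E2_def by simp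
    have h1b: "\<bar>h1\<bar> \<le> H" unfolding h1_def by (rule hh_bound[OF clip_bound])
    have h12: "\<bar>h1 - h2\<bar> \<le> Lh * d"
    proof -
      have "\<bar>h1 - h2\<bar> \<le> Lh * \<bar>clip (g1 s) - clip (g2 s)\<bar>"
        unfolding h1_def h2_def by (rule hh_lip[OF clip_bound clip_bound])
      also have "\<dots> \<le> Lh * d" using clip_lip[of "g1 s" "g2 s"] d[of s] Lh_pos
        by (intro mult_left_mono) auto
      finally show ?thesis .
    qed
    have lb: "\<bar>l\<bar> \<le> L" using lamE_bound[of "s - \<tau>"] unfolding l_def by simp
    have "F1 s - F2 s = l * ((E1 - E2) * h1 + E2 * (h1 - h2))"
      unfolding F1_def F2_def E1_def E2_def h1_def h2_def l_def by (simp add: algebra_simps)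
    then have "\<bar>F1 s - F2 s\<bar> = \<bar>l\<bar> * \<bar>(E1 - E2) * h1 + E2 * (h1 - h2)\<bar>" by (simp add: abs_mult)
    also have "\<dots> \<le> L * (\<bar>E1 - E2\<bar> * \<bar>h1\<bar> + E2 * \<bar>h1 - h2\<bar>)"
    proof (rule mult_mono[OF lb])
      show "\<bar>(E1 - E2) * h1 + E2 * (h1 - h2)\<bar> \<le> \<bar>E1 - E2\<bar> * \<bar>h1\<bar> + E2 * \<bar>h1 - h2\<bar>"
        using abs_triangle_ineq[of "(E1 - E2) * h1" "E2 * (h1 - h2)"] E2p by (simp add: abs_mult)
    qed (use L_pos in auto)
    also have "\<dots> \<le> L * ((8 * d / beta k) * X * H + X * (Lh * d))"
      using L_pos eE h1b E2b h12 E2p d0 b0 H_pos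
      by (intro mult_left_mono add_mono mult_mono) auto
    also have "\<dots> = L * d * (8 * H / beta k + Lh) * X" by (simp add: algebra_simps)
    finally show "\<bar>F1 s - F2 s\<bar> \<le> L * d * (8 * H / beta k + Lh) * exp (- (beta k / 2) * (s - t))"
      unfolding X_def .
  qed
  have e: "Lm k g1 \<tau> t - Lm k g2 \<tau> t =
     (exp (Psi k g1 t - Psi k g1 T) - exp (Psi k g2 t - Psi k g2 T)) * (c / 2 * lamE (T - \<tau>))
     - integral {t..T} (\<lambda>s. F1 s - F2 s)"
  proof -
    have a1: "Lm k g1 \<tau> t = exp (Psi k g1 t - Psi k g1 T) * (c / 2 * lamE (T - \<tau>)) - integral {t..T} F1"
      unfolding F1_def by (rule Lm_alt[OF g1 t])
    have a2: "Lm k g2 \<tau> t = exp (Psi k g2 t - Psi k g2 T) * (c / 2 * lamE (T - \<tau>)) - integral {t..T} F2"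
      unfolding F2_def by (rule Lm_alt[OF g2 t])
    show ?thesis unfolding a1 a2 idiff[symmetric] by (simp add: algebra_simps)
  qed
  have "\<bar>Lm k g1 \<tau> t - Lm k g2 \<tau> t\<bar> \<le> (8 * d / beta k) * (c / 2 * L) + (L * d * (8 * H / beta k + Lh)) / (beta k / 2)"
    unfolding e by (rule order_trans[OF abs_triangle_ineq4 add_mono[OF t1 t2]])
  also have "\<dots> = (4 * c * L * d + 2 * L * d * Lh + 16 * L * d * H / beta k) / beta k"
    using b0 by (simp add: field_simps)
  also have "\<dots> \<le> (4 * c * L * d + 2 * L * d * Lh + 16 * L * d * H) / beta k"
  proof -
    have "16 * L * d * H / beta k \<le> 16 * L * d * H"
    proof -
      have "0 \<le> 16 * L * d * H" using L_pos d0 H_pos by simp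
      then have "16 * L * d * H / beta k \<le> 16 * L * d * H / 1"
        using b by (intro divide_left_mono) auto
      then show ?thesis by simp
    qed
    then show ?thesis using b0 by (intro divide_right_mono) auto
  qed
  also have "\<dots> = (4 * c * L + 16 * L * H + 2 * L * Lh) / beta k * d"
    by (simp add: algebra_simps)
  finally show ?thesis .
qed

end


lemma compact_triangle: "compact (triangle T)"
proof -
  have eq: "triangle T = {p. 0 \<le> fst p} \<inter> {p. fst p \<le> snd p} \<inter> {p. snd p \<le> T}"
    unfolding triangle_def by auto
  have "closed (triangle T)" unfolding eq
    by (intro closed_Int closed_Collect_le continuous_intros)
  moreover have "bounded (triangle T)"
    by (rule bounded_subset[OF compact_imp_bounded[OF compact_Times[OF compact_Icc compact_Icc]], of _ 0 T 0 T])
       (auto simp: triangle_def)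
  ultimately show ?thesis using compact_eq_bounded_closed by blast
qed

context setting
begin

lemma lam_bound: "x \<in> {0..T} \<Longrightarrow> 0 < lam x \<and> lam x \<le> L"
  using lamE_bound[of x] lamE_id[of x] by simp

lemma uniqueness:
  assumes s1: "is_solution T k q eta c lam L1" and s2: "is_solution T k q eta c lam L2"
  shows "\<forall>(\<tau>, t) \<in> triangle T. L1 \<tau> t = L2 \<tau> t"
proof -
  have c1: "continuous_on (triangle T) (\<lambda>(\<tau>, t). L1 \<tau> t)" using s1 unfolding is_solution_def by blast
  have c2: "continuous_on (triangle T) (\<lambda>(\<tau>, t). L2 \<tau> t)" using s2 unfolding is_solution_def by blast
  have d1: "\<And>\<tau> t. (\<tau>, t) \<in> triangle T \<Longrightarrow> \<exists>D. ((\<lambda>s. L1 \<tau> s) has_real_derivative D) (at t within {\<tau>..T}) \<and>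
             D - 2 * k * L1 \<tau> t + 2 * lam (t - \<tau>) * (L1 t t + q / 2)^2
               - 4 * (L1 \<tau> t + q / 2 * lam (t - \<tau>)) * (L1 t t + q / 2)
               + eta / 2 * lam (t - \<tau>) = 0"
    using s1 unfolding is_solution_def by blast
  have d2: "\<And>\<tau> t. (\<tau>, t) \<in> triangle T \<Longrightarrow> \<exists>D. ((\<lambda>s. L2 \<tau> s) has_real_derivative D) (at t within {\<tau>..T}) \<and>
             D - 2 * k * L2 \<tau> t + 2 * lam (t - \<tau>) * (L2 t t + q / 2)^2
               - 4 * (L2 \<tau> t + q / 2 * lam (t - \<tau>)) * (L2 t t + q / 2)
               + eta / 2 * lam (t - \<tau>) = 0"
    using s2 unfolding is_solution_def by blast
  have b1: "\<And>\<tau>. 0 \<le> \<tau> \<and> \<tau> \<le> T \<Longrightarrow> L1 \<tau> T = c / 2 * lam (T - \<tau>)" using s1 unfolding is_solution_def by blast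
  have b2: "\<And>\<tau>. 0 \<le> \<tau> \<and> \<tau> \<le> T \<Longrightarrow> L2 \<tau> T = c / 2 * lam (T - \<tau>)" using s2 unfolding is_solution_def by blast
  have bnd: "\<exists>B. \<forall>p\<in>triangle T. \<bar>(\<lambda>(\<tau>, t). Lx \<tau> t) p\<bar> \<le> B"
    if "continuous_on (triangle T) (\<lambda>(\<tau>, t). Lx \<tau> t)" for Lx :: "real \<Rightarrow> real \<Rightarrow> real"
  proof -
    have "bounded ((\<lambda>(\<tau>, t). Lx \<tau> t) ` triangle T)"
      by (rule compact_imp_bounded[OF compact_continuous_image[OF that compact_triangle]])
    then show ?thesis unfolding bounded_iff real_norm_def by auto
  qed
  obtain B1 where B1: "\<forall>p\<in>triangle T. \<bar>(\<lambda>(\<tau>, t). L1 \<tau> t) p\<bar> \<le> B1" using bnd[OF c1] by blast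
  obtain B2 where B2: "\<forall>p\<in>triangle T. \<bar>(\<lambda>(\<tau>, t). L2 \<tau> t) p\<bar> \<le> B2" using bnd[OF c2] by blast
  define B where "B = max 0 (max B1 B2)"
  have B0: "B \<ge> 0" by (simp add: B_def)
  have L1b: "\<bar>L1 \<tau> t\<bar> \<le> B" if "(\<tau>, t) \<in> triangle T" for \<tau> t using B1 that unfolding B_def by force
  have L2b: "\<bar>L2 \<tau> t\<bar> \<le> B" if "(\<tau>, t) \<in> triangle T" for \<tau> t using B2 that unfolding B_def by force
  define K where "K = (2 * \<bar>k\<bar> + 4 * B + 2 * q) + (2 * L * (2 * B + q) + 4 * B + 2 * q * L)"
  have K0: "K \<ge> 0" unfolding K_def using B0 q L_pos by simp
  define \<epsilon> where "\<epsilon> = 1 / (2 * (K + 1))"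
  have \<epsilon>0: "\<epsilon> > 0" using K0 by (simp add: \<epsilon>_def)
  have K\<epsilon>: "K * \<epsilon> \<le> 1 / 2" using K0 by (simp add: \<epsilon>_def field_simps)
  define \<delta> where "\<delta> = (\<lambda>(\<tau>, t). L1 \<tau> t - L2 \<tau> t)"
  have \<delta>c: "continuous_on (triangle T) (\<lambda>p. \<bar>\<delta> p\<bar>)"
  proof -
    have "continuous_on (triangle T) \<delta>"
      using continuous_on_diff[OF c1 c2] unfolding \<delta>_def by (simp add: split_beta)
    then show ?thesis by (intro continuous_intros)
  qed
  have Dbound: "\<exists>D. ((\<lambda>s. L1 \<tau> s - L2 \<tau> s) has_real_derivative D) (at u within {\<tau>..T}) \<and>
         \<bar>D\<bar> \<le> K * Mx"
    if u: "(\<tau>, u) \<in> triangle T" and m1: "\<bar>L1 \<tau> u - L2 \<tau> u\<bar> \<le> Mx" and m2: "\<bar>L1 u u - L2 u u\<bar> \<le> Mx"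
    for \<tau> u Mx
  proof -
    obtain D1 where D1: "((\<lambda>s. L1 \<tau> s) has_real_derivative D1) (at u within {\<tau>..T})"
      "D1 - 2 * k * L1 \<tau> u + 2 * lam (u - \<tau>) * (L1 u u + q / 2)^2
               - 4 * (L1 \<tau> u + q / 2 * lam (u - \<tau>)) * (L1 u u + q / 2)
               + eta / 2 * lam (u - \<tau>) = 0" using d1[OF u] by blast
    obtain D2 where D2: "((\<lambda>s. L2 \<tau> s) has_real_derivative D2) (at u within {\<tau>..T})"
      "D2 - 2 * k * L2 \<tau> u + 2 * lam (u - \<tau>) * (L2 u u + q / 2)^2
               - 4 * (L2 \<tau> u + q / 2 * lam (u - \<tau>)) * (L2 u u + q / 2)
               + eta / 2 * lam (u - \<tau>) = 0" using d2[OF u] by blast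
    define l where "l = lam (u - \<tau>)"
    define G1 where "G1 = L1 u u"
    define G2 where "G2 = L2 u u"
    define X1 where "X1 = L1 \<tau> u"
    define X2 where "X2 = L2 \<tau> u"
    have uu: "(u, u) \<in> triangle T" using u unfolding triangle_def by auto
    have lb: "0 < l \<and> l \<le> L" unfolding l_def by (rule lam_bound) (use u in \<open>auto simp: triangle_def\<close>)
    have G1b: "\<bar>G1\<bar> \<le> B" unfolding G1_def by (rule L1b[OF uu])
    have G2b: "\<bar>G2\<bar> \<le> B" unfolding G2_def by (rule L2b[OF uu])
    have X2b: "\<bar>X2\<bar> \<le> B" unfolding X2_def by (rule L2b[OF u])
    have eq: "D1 - D2 = (X1 - X2) * (2 * k + 4 * (G1 + q / 2)) + (G1 - G2) * (- 2 * l * (G1 + G2 + q) + 4 * X2 + 2 * q * l)"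
      using D1(2) D2(2) unfolding l_def[symmetric] G1_def[symmetric] G2_def[symmetric] X1_def[symmetric] X2_def[symmetric]
      by (simp add: power2_eq_square algebra_simps)
    have a1: "\<bar>2 * k + 4 * (G1 + q / 2)\<bar> \<le> 2 * \<bar>k\<bar> + 4 * B + 2 * q"
      using G1b q by (simp add: abs_le_iff; linarith)
    have "\<bar>- 2 * l * (G1 + G2 + q)\<bar> \<le> 2 * L * (2 * B + q)"
    proof -
      have "\<bar>G1 + G2 + q\<bar> \<le> 2 * B + q" using G1b G2b q by (simp add: abs_le_iff; linarith)
      then have "l * \<bar>G1 + G2 + q\<bar> \<le> L * (2 * B + q)" using lb by (intro mult_mono) auto
      then show ?thesis using lb by (simp add: abs_mult)
    qed
    moreover have "\<bar>2 * q * l\<bar> \<le> 2 * q * L" using lb q by (simp add: abs_mult)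
    ultimately have a2: "\<bar>- 2 * l * (G1 + G2 + q) + 4 * X2 + 2 * q * l\<bar> \<le> 2 * L * (2 * B + q) + 4 * B + 2 * q * L"
      using X2b by (simp add: abs_le_iff; linarith)
    have "\<bar>D1 - D2\<bar> \<le> \<bar>X1 - X2\<bar> * \<bar>2 * k + 4 * (G1 + q / 2)\<bar> + \<bar>G1 - G2\<bar> * \<bar>- 2 * l * (G1 + G2 + q) + 4 * X2 + 2 * q * l\<bar>"
      unfolding eq using abs_triangle_ineq by (metis abs_mult)
    also have "\<dots> \<le> Mx * (2 * \<bar>k\<bar> + 4 * B + 2 * q) + Mx * (2 * L * (2 * B + q) + 4 * B + 2 * q * L)"
      using m1 m2 a1 a2 unfolding X1_def X2_def G1_def G2_def
      by (intro add_mono mult_mono) auto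
    also have "\<dots> = K * Mx" unfolding K_def by (simp add: algebra_simps)
    finally show ?thesis using DERIV_diff[OF D1(1) D2(1)] by blast
  qed
  have P: "\<forall>\<tau> t. (\<tau>, t) \<in> triangle T \<and> t \<ge> T - real n * \<epsilon> \<longrightarrow> L1 \<tau> t = L2 \<tau> t" for n
  proof (induction n)
    case 0
    show ?case
    proof (intro allI impI)
      fix \<tau> t assume a: "(\<tau>, t) \<in> triangle T \<and> T - real 0 * \<epsilon> \<le> t"
      then have "t = T" "0 \<le> \<tau> \<and> \<tau> \<le> T" unfolding triangle_def by auto
      then show "L1 \<tau> t = L2 \<tau> t" using b1[of \<tau>] b2[of \<tau>] by simp
    qed
  next
    case (Suc n)
    define s1 where "s1 = T - real n * \<epsilon>"
    have s1T: "s1 \<le> T" using \<epsilon>0 by (simp add: s1_def)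
    define S where "S = {p \<in> triangle T. snd p \<ge> s1 - \<epsilon>}"
    have Ssub: "S \<subseteq> triangle T" by (auto simp: S_def)
    have Scomp: "compact S"
    proof -
      have "S = triangle T \<inter> {p. s1 - \<epsilon> \<le> snd p}" by (auto simp: S_def)
      moreover have "closed {p :: real \<times> real. s1 - \<epsilon> \<le> snd p}"
        by (intro closed_Collect_le continuous_intros)
      ultimately show ?thesis using compact_Int_closed compact_triangle by metis
    qed
    have zero: "\<delta> p = 0" if "p \<in> S" for p
    proof -
      from that have ne: "S \<noteq> {}" by auto
      obtain pm where pm: "pm \<in> S" "\<And>p. p \<in> S \<Longrightarrow> \<bar>\<delta> p\<bar> \<le> \<bar>\<delta> pm\<bar>"
        using continuous_attains_sup[OF Scomp ne continuous_on_subset[OF \<delta>c Ssub]] by blast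
      obtain \<tau>m tm where pmeq: "pm = (\<tau>m, tm)" by fastforce
      define Mx where "Mx = \<bar>\<delta> pm\<bar>"
      have pmT: "(\<tau>m, tm) \<in> triangle T" "tm \<ge> s1 - \<epsilon>" using pm(1) pmeq by (auto simp: S_def)
      have "Mx = 0"
      proof (cases "tm \<ge> s1")
        case True
        then show ?thesis using Suc.IH pmT pmeq unfolding Mx_def \<delta>_def s1_def by auto
      next
        case False
        define f where "f = (\<lambda>s. L1 \<tau>m s - L2 \<tau>m s)"
        have sub: "{tm..s1} \<subseteq> {\<tau>m..T}" using pmT s1T by (auto simp: triangle_def)
        have "\<forall>u\<in>{tm..s1}. \<exists>D. (f has_real_derivative D) (at u within {tm..s1}) \<and> \<bar>D\<bar> \<le> K * Mx"
        proof
          fix u assume u: "u \<in> {tm..s1}"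
          have ut: "(\<tau>m, u) \<in> triangle T" using u pmT s1T by (auto simp: triangle_def)
          have uS1: "(\<tau>m, u) \<in> S" using u ut pmT by (auto simp: S_def)
          have uS2: "(u, u) \<in> S" using u ut pmT by (auto simp: S_def triangle_def)
          have m1: "\<bar>L1 \<tau>m u - L2 \<tau>m u\<bar> \<le> Mx" using pm(2)[OF uS1] unfolding Mx_def \<delta>_def by simp
          have m2: "\<bar>L1 u u - L2 u u\<bar> \<le> Mx" using pm(2)[OF uS2] unfolding Mx_def \<delta>_def by simp
          obtain D where D: "((\<lambda>s. L1 \<tau>m s - L2 \<tau>m s) has_real_derivative D) (at u within {\<tau>m..T})" "\<bar>D\<bar> \<le> K * Mx"
            using Dbound[OF ut m1 m2] by blast
          show "\<exists>D. (f has_real_derivative D) (at u within {tm..s1}) \<and> \<bar>D\<bar> \<le> K * Mx"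
            using DERIV_subset[OF D(1) sub] D(2) unfolding f_def by blast
        qed
        from bchoice[OF this] obtain f' where f'0: "\<forall>u\<in>{tm..s1}. (f has_real_derivative f' u) (at u within {tm..s1}) \<and> \<bar>f' u\<bar> \<le> K * Mx"
          by blast
        have f': "\<And>u. u \<in> {tm..s1} \<Longrightarrow> (f has_real_derivative f' u) (at u within {tm..s1}) \<and> \<bar>f' u\<bar> \<le> K * Mx"
          using f'0 by blast
        have "norm (f s1 - f tm) \<le> (K * Mx) * norm (s1 - tm)"
          by (rule field_differentiable_bound[where S="{tm..s1}" and f'=f'])
             (use f' False in auto)
        moreover have "f s1 = 0"
        proof -
          have "(\<tau>m, s1) \<in> triangle T" using pmT False s1T by (auto simp: triangle_def)
          then show ?thesis using Suc.IH unfolding f_def s1_def by auto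
        qed
        moreover have "\<bar>f tm\<bar> = Mx" unfolding f_def Mx_def pmeq \<delta>_def by simp
        moreover have "s1 - tm \<le> \<epsilon>" using pmT by simp
        moreover have "Mx \<ge> 0" by (simp add: Mx_def)
        ultimately have "Mx \<le> K * Mx * (s1 - tm)" using False by simp
        also have "\<dots> \<le> K * Mx * \<epsilon>"
          using \<open>s1 - tm \<le> \<epsilon>\<close> K0 \<open>Mx \<ge> 0\<close> by (intro mult_left_mono) auto
        finally have "Mx \<le> K * Mx * \<epsilon>" .
        also have "\<dots> = (K * \<epsilon>) * Mx" by simp
        also have "\<dots> \<le> (1 / 2) * Mx" using K\<epsilon> \<open>Mx \<ge> 0\<close> by (intro mult_right_mono) auto
        finally show ?thesis using \<open>Mx \<ge> 0\<close> by simp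
      qed
      then show ?thesis using pm(2)[OF that] unfolding Mx_def by simp
    qed
    show ?case
    proof (intro allI impI)
      fix \<tau> t assume a: "(\<tau>, t) \<in> triangle T \<and> T - real (Suc n) * \<epsilon> \<le> t"
      then have "(\<tau>, t) \<in> S" unfolding S_def s1_def by (auto simp: algebra_simps)
      then show "L1 \<tau> t = L2 \<tau> t" using zero unfolding \<delta>_def by fastforce
    qed
  qed
  obtain n :: nat where n: "T / \<epsilon> \<le> real n" using real_arch_simple by blast
  have "T \<le> real n * \<epsilon>" using n \<epsilon>0 by (simp add: divide_le_eq)
  then show ?thesis using P[of n] unfolding triangle_def by fastforce
qed

end


context setting
begin

lemma existence:
  assumes b1: "beta k \<ge> 1" and b2: "2 * L * H / beta k \<le> 1"
    and b3: "(4 * c * L + 16 * L * H + 2 * L * Lh) / beta k \<le> 1 / 2"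
  shows "\<exists>Lam. is_solution T k q eta c lam Lam"
proof -
  define \<theta> where "\<theta> = (4 * c * L + 16 * L * H + 2 * L * Lh) / beta k"
  have \<theta>0: "\<theta> \<ge> 0" unfolding \<theta>_def using b1 c L_pos H_pos Lh_pos by simp
  have b0: "beta k > 0" using b1 by simp
  have gc: "continuous_on UNIV (apply_bcontfun g)" for g :: "real \<Rightarrow>\<^sub>C real" by simp
  define F :: "(real \<Rightarrow>\<^sub>C real) \<Rightarrow> (real \<Rightarrow>\<^sub>C real)" where
    "F g = Bcontfun (\<lambda>x. Lm k (apply_bcontfun g) (clamp x) (clamp x))" for g
  have mem: "(\<lambda>x. Lm k (apply_bcontfun g) (clamp x) (clamp x)) \<in> bcontfun" for g
  proof (rule bcontfun_normI)
    have "continuous_on UNIV (\<lambda>x. (\<lambda>(\<tau>, t). Lm k (apply_bcontfun g) \<tau> t) (clamp x, clamp x))"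
      by (rule continuous_on_compose2[OF Lm_cont[OF gc]])
         (use clamp_in in \<open>auto intro!: continuous_intros clamp_cont\<close>)
    then show "continuous_on UNIV (\<lambda>x. Lm k (apply_bcontfun g) (clamp x) (clamp x))" by simp
    fix x show "norm (Lm k (apply_bcontfun g) (clamp x) (clamp x)) \<le> c / 2 * L + 2 * L * H / beta k"
      using Lm_bound[OF gc clamp_in b0] by simp
  qed
  have Fapp: "apply_bcontfun (F g) x = Lm k (apply_bcontfun g) (clamp x) (clamp x)" for g x
    unfolding F_def using Bcontfun_inverse[OF mem] by simp
  have contr: "dist (F g1) (F g2) \<le> \<theta> * dist g1 g2" for g1 g2
  proof (rule dist_bound)
    fix x
    have d: "\<bar>apply_bcontfun g1 y - apply_bcontfun g2 y\<bar> \<le> dist g1 g2" for y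
      using dist_bounded[of g1 y g2] by (simp add: dist_real_def)
    show "dist (apply_bcontfun (F g1) x) (apply_bcontfun (F g2) x) \<le> \<theta> * dist g1 g2"
      unfolding Fapp dist_real_def \<theta>_def
      by (rule Lm_contr[OF gc gc d clamp_in b1])
  qed
  have \<theta>1: "\<theta> < 1" using b3 unfolding \<theta>_def by linarith
  have "\<exists>!g. F g = g"
    by (rule banach_fix_type[OF \<theta>0 \<theta>1]) (use contr in auto)
  then obtain g where gfix: "F g = g" by blast
  define G where "G = apply_bcontfun g"
  have Gc: "continuous_on UNIV G" unfolding G_def by simp
  have Gfix: "G x = Lm k G (clamp x) (clamp x)" for x
    using Fapp[of g x] gfix unfolding G_def by simp
  have Gb: "\<bar>G x\<bar> \<le> R" for x
  proof -
    have "\<bar>G x\<bar> \<le> c / 2 * L + 2 * L * H / beta k"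
      using Gfix[of x] Lm_bound[OF Gc clamp_in b0] by simp
    then show ?thesis using b2 unfolding R_def by simp
  qed
  have Gclip: "clip (G x) = G x" for x by (rule clip_id[OF Gb])
  have Gdiag: "G t = Lm k G t t" if "t \<in> {0..T}" for t
    using Gfix[of t] clamp_id[OF that] by simp
  show ?thesis
  proof (intro exI[of _ "Lm k G"])
    show "is_solution T k q eta c lam (Lm k G)"
      unfolding is_solution_def
    proof (intro conjI allI impI)
      show "continuous_on (triangle T) (\<lambda>(\<tau>, t). Lm k G \<tau> t)"
        by (rule continuous_on_subset[OF Lm_cont[OF Gc]]) (auto simp: triangle_def)
    next
      fix \<tau> t assume tr: "(\<tau>, t) \<in> triangle T"
      then have tt: "0 \<le> \<tau>" "\<tau> \<le> t" "t \<le> T" by (auto simp: triangle_def)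
      define D where "D = (2 * k + ff G t) * Lm k G \<tau> t + lamE (t - \<tau>) * hh (clip (G t))"
      have der: "((\<lambda>s. Lm k G \<tau> s) has_real_derivative D) (at t within {\<tau>..T})"
        unfolding D_def by (rule Lm_deriv[OF Gc tt])
      have e1: "Lm k G t t = G t" using Gdiag[of t] tt by simp
      have e2: "lamE (t - \<tau>) = lam (t - \<tau>)" by (rule lamE_id) (use tt in auto)
      have "D - 2 * k * Lm k G \<tau> t + 2 * lam (t - \<tau>) * (Lm k G t t + q / 2)^2
               - 4 * (Lm k G \<tau> t + q / 2 * lam (t - \<tau>)) * (Lm k G t t + q / 2)
               + eta / 2 * lam (t - \<tau>) = 0"
        unfolding D_def e1 e2 Gclip ff_def hh_def by (simp add: power2_eq_square algebra_simps)
      then show "\<exists>D. ((\<lambda>s. Lm k G \<tau> s) has_real_derivative D) (at t within {\<tau>..T}) \<and>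
             D - 2 * k * Lm k G \<tau> t + 2 * lam (t - \<tau>) * (Lm k G t t + q / 2)^2
               - 4 * (Lm k G \<tau> t + q / 2 * lam (t - \<tau>)) * (Lm k G t t + q / 2)
               + eta / 2 * lam (t - \<tau>) = 0" using der by blast
    next
      fix \<tau> :: real assume "0 \<le> \<tau> \<and> \<tau> \<le> T"
      then show "Lm k G \<tau> T = c / 2 * lam (T - \<tau>)"
        using Lm_T[OF Gc] lamE_id[of "T - \<tau>"] by simp
    qed
  qed
qed

lemma main:
  "\<exists>C>0. \<forall>k::real. k \<ge> 0 \<and> k > max (4 * C^2) 1 \<longrightarrow>
           (\<exists>Lam. is_solution T k q eta c lam Lam) \<and>
           (\<forall>Lam1 Lam2. is_solution T k q eta c lam Lam1 \<and> is_solution T k q eta c lam Lam2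
              \<longrightarrow> (\<forall>(\<tau>, t) \<in> triangle T. Lam1 \<tau> t = Lam2 \<tau> t))"
proof -
  define X where "X = 1 + 2 * L * H + 2 * (4 * c * L + 16 * L * H + 2 * L * Lh)"
  have X1: "X \<ge> 1" unfolding X_def using c L_pos H_pos Lh_pos by simp
  define K0 where "K0 = (M + X) / 2"
  have K0p: "K0 > 0" unfolding K0_def using X1 M_pos by simp
  define C where "C = sqrt K0"
  have Cp: "C > 0" unfolding C_def using K0p by simp
  have C2: "4 * C^2 \<ge> K0" unfolding C_def using K0p by simp
  show ?thesis
  proof (rule exI[of _ C], rule conjI[OF Cp], rule allI, rule impI)
    fix k :: real assume k: "k \<ge> 0 \<and> k > max (4 * C^2) 1"
    have bX: "beta k \<ge> X" using k C2 unfolding beta_def K0_def by simp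
    have bp: "beta k > 0" using bX X1 by simp
    have b1: "beta k \<ge> 1" using bX X1 by simp
    have nn: "0 \<le> L * H" "0 \<le> c * L" "0 \<le> L * Lh" using c L_pos H_pos Lh_pos by auto
    have b2: "2 * L * H / beta k \<le> 1"
      using bX bp unfolding X_def using nn by (simp add: divide_le_eq)
    have b3: "(4 * c * L + 16 * L * H + 2 * L * Lh) / beta k \<le> 1 / 2"
      using bX bp unfolding X_def using nn by (simp add: divide_le_eq)
    show "(\<exists>Lam. is_solution T k q eta c lam Lam) \<and> (\<forall>Lam1 Lam2. is_solution T k q eta c lam Lam1 \<and> is_solution T k q eta c lam Lam2
              \<longrightarrow> (\<forall>(\<tau>, t) \<in> triangle T. Lam1 \<tau> t = Lam2 \<tau> t))"
      using existence[OF b1 b2 b3] uniqueness by blast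
  qed
qed

end

theorem lemma4p1:
  fixes T q \<eta> c :: real and lam :: "real \<Rightarrow> real"
  assumes "T > 0" and "q > 0" and "\<eta> > 0" and "c > 0"
    and "\<forall>x\<in>{0..T}. lam x > 0"
    and "mono_on {0..T} lam"
    and "\<exists>lam'. (\<forall>x\<in>{0..T}. (lam has_real_derivative lam' x) (at x within {0..T}))
                 \<and> continuous_on {0..T} lam'"
    and "lam 0 = 1"
  shows "\<exists>C>0. \<forall>k::real. k \<ge> 0 \<and> k > max (4 * C^2) 1 \<longrightarrow>
           (\<exists>Lam. is_solution T k q \<eta> c lam Lam) \<and>
           (\<forall>Lam1 Lam2. is_solution T k q \<eta> c lam Lam1 \<and> is_solution T k q \<eta> c lam Lam2
              \<longrightarrow> (\<forall>(\<tau>, t) \<in> triangle T. Lam1 \<tau> t = Lam2 \<tau> t))"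
proof -
  obtain lam' where d: "\<forall>x\<in>{0..T}. (lam has_real_derivative lam' x) (at x within {0..T})"
    using assms(7) by blast
  have lc: "continuous_on {0..T} lam"
    unfolding continuous_on_eq_continuous_within using d DERIV_continuous by blast
  interpret setting T q \<eta> c lam
    by unfold_locales (use assms lc in auto)
  show ?thesis by (rule main)
qed

end
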